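(* Let $G$ be a nontrivial finite abelian $p$-group ($p$ any prime). Then $G$ has a unique minimal nontrivial characteristic subgroup (i.e. the set of nontrivial characteristic subgroups of $G$ has a least element under inclusion). *)

theory Defs
  imports "HOL-Algebra.Algebra"
begin

definition characteristic_subgroup :: "'a set \<Rightarrow> ('a, 'b) monoid_scheme \<Rightarrow> bool" where
  "characteristic_subgroup H G \<longleftrightarrow>
     subgroup H G \<and> (\<forall>\<phi> \<in> iso G G. \<phi> ` H = H)"

end

theory Submission
  imports Defs "HOL-Computational_Algebra.Primes"
begin

definition hmod :: "('a,'b) monoid_scheme \<Rightarrow> int \<Rightarrow> 'a set \<Rightarrow> ('a \<Rightarrow> int) \<Rightarrow> bool" where
  "hmod G q S f \<longleftrightarrow> (\<forall>a\<in>S. \<forall>b\<in>S. q dvd f (a \<otimes>\<^bsub>G\<^esub> b) - f a - f b)"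

context comm_group begin

lemma hmod_one:
  assumes "subgroup S G" "hmod G q S f" shows "q dvd f \<one>"
proof -
  have "\<one> \<in> S" by (rule subgroup.one_closed[OF assms(1)])
  then have "q dvd f (\<one> \<otimes> \<one>) - f \<one> - f \<one>" using assms(2) unfolding hmod_def by blast
  then have "q dvd - f \<one>" by simp
  then show ?thesis by simp
qed

lemma hmod_nat_pow:
  assumes "subgroup S G" "hmod G q S f" "s \<in> S" shows "q dvd f (s [^] (n::nat)) - int n * f s"
proof (induction n)
  case 0
  then show ?case using hmod_one[OF assms(1,2)] by simp
next
  case (Suc n)
  have sc: "s \<in> carrier G" by (rule subgroup.mem_carrier[OF assms(1,3)])
  have sn: "s [^] n \<in> S" using assms(1,3) subgroup_int_pow_closed[OF assms(1,3), of "int n"]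
    by (simp add: int_pow_int)
  have "q dvd f (s [^] n \<otimes> s) - f (s [^] n) - f s" using assms(2,3) sn unfolding hmod_def by blast
  then have "q dvd (f (s [^] n \<otimes> s) - f (s [^] n) - f s) + (f (s [^] n) - int n * f s)"
    using Suc by (rule dvd_add)
  then show ?case using sc by (simp add: algebra_simps)
qed

lemma hmod_inv:
  assumes "subgroup S G" "hmod G q S f" "s \<in> S" shows "q dvd f (inv s) + f s"
proof -
  have sc: "s \<in> carrier G" by (rule subgroup.mem_carrier[OF assms(1,3)])
  have "inv s \<in> S" by (rule subgroup.m_inv_closed[OF assms(1,3)])
  then have "q dvd f (s \<otimes> inv s) - f s - f (inv s)" using assms(2,3) unfolding hmod_def by blast
  then have "q dvd f \<one> - (f (s \<otimes> inv s) - f s - f (inv s))"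
    by (rule dvd_diff[OF hmod_one[OF assms(1,2)]])
  moreover have "f \<one> - (f (s \<otimes> inv s) - f s - f (inv s)) = f (inv s) + f s" using sc by simp
  ultimately show ?thesis by simp
qed

lemma hmod_int_pow:
  assumes "subgroup S G" "hmod G q S f" "s \<in> S" shows "q dvd f (s [^] (k::int)) - k * f s"
proof (cases "k \<ge> 0")
  case True
  then have "s [^] k = s [^] nat k" by simp
  then show ?thesis using hmod_nat_pow[OF assms, of "nat k"] True by simp
next
  case False
  have sc: "s \<in> carrier G" by (rule subgroup.mem_carrier[OF assms(1,3)])
  have sn: "s [^] nat (-k) \<in> S" using subgroup_int_pow_closed[OF assms(1,3), of "int (nat (-k))"]
    unfolding int_pow_int .
  have e: "s [^] k = inv (s [^] nat (-k))" using False by (simp add: int_pow_def2 del: pow_nat)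
  have "q dvd f (inv (s [^] nat (-k))) + f (s [^] nat (-k))" using hmod_inv[OF assms(1,2) sn] .
  moreover have "q dvd f (s [^] nat (-k)) - int (nat (-k)) * f s" using hmod_nat_pow[OF assms] .
  ultimately have "q dvd (f (inv (s [^] nat (-k))) + f (s [^] nat (-k))) - (f (s [^] nat (-k)) - int (nat (-k)) * f s)"
    by (rule dvd_diff)
  then show ?thesis using e False by (simp add: algebra_simps del: pow_nat)
qed

end
context comm_group begin

lemma shift_mult:
  assumes "u \<in> carrier G" "v \<in> carrier G" "g \<in> carrier G"
  shows "(u \<otimes> g [^] (-i::int)) \<otimes> (v \<otimes> g [^] (-j::int)) = (u \<otimes> v) \<otimes> g [^] (-(i+j))"
proof -
  have "g [^] (-(i+j)) = g [^] (-i) \<otimes> g [^] (-j)" using int_pow_mult[OF assms(3), of "-i" "-j"] by simp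
  then show ?thesis using assms by (simp add: m_ac)
qed

lemma ext_step:
  assumes S: "subgroup S G" and g: "g \<in> carrier G" "g \<notin> S" and f: "hmod G (int q) S f"
    and gq: "g [^] q = \<one>" and q: "q > 0"
  shows "\<exists>T F. subgroup T G \<and> S \<subseteq> T \<and> g \<in> T \<and> hmod G (int q) T F \<and> (\<forall>s\<in>S. int q dvd F s - f s)"
proof -
  have Sc: "S \<subseteq> carrier G" by (rule subgroup.subset[OF S])
  define m where "m = (LEAST n::nat. 0 < n \<and> g [^] n \<in> S)"
  have ex: "0 < q \<and> g [^] q \<in> S" using q gq subgroup.one_closed[OF S] by simp
  have m: "0 < m \<and> g [^] m \<in> S" unfolding m_def by (rule LeastI[of _ q], rule ex)
  have mle: "\<And>n. 0 < n \<Longrightarrow> g [^] n \<in> S \<Longrightarrow> m \<le> n" unfolding m_def by (rule Least_le) simp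
  have key: "g [^] (i::int) \<in> S \<longleftrightarrow> int m dvd i" for i
  proof
    assume "int m dvd i"
    then obtain k where "i = int m * k" by blast
    then have "g [^] i = (g [^] int m) [^] k" using g by (simp add: int_pow_pow)
    also have "\<dots> \<in> S" using subgroup_int_pow_closed[OF S] m by (simp add: int_pow_int)
    finally show "g [^] i \<in> S" .
  next
    assume gi: "g [^] i \<in> S"
    define r where "r = i mod int m"
    have r: "0 \<le> r" "r < int m" using m unfolding r_def by auto
    have ieq: "i = int m * (i div int m) + r" unfolding r_def by simp
    have "g [^] i = g [^] (int m * (i div int m) + r)" by (subst ieq[symmetric]) (rule refl)
    also have "\<dots> = g [^] (int m * (i div int m)) \<otimes> g [^] r" by (rule int_pow_mult[OF g(1)])
    finally have "g [^] i = g [^] (int m * (i div int m)) \<otimes> g [^] r" .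
    then have "g [^] r = inv (g [^] (int m * (i div int m))) \<otimes> g [^] i"
      using g by (simp add: inv_solve_left)
    moreover have "g [^] (int m * (i div int m)) \<in> S"
    proof -
      have "g [^] (int m * (i div int m)) = (g [^] m) [^] (i div int m)" using g by (simp flip: int_pow_int add: int_pow_pow)
      then show ?thesis using subgroup_int_pow_closed[OF S, of "g [^] m" "i div int m"] m by simp
    qed
    ultimately have "g [^] r \<in> S" using subgroup.m_closed[OF S subgroup.m_inv_closed[OF S] gi] by simp
    then have "g [^] nat r \<in> S" using r by (simp add: pow_nat)
    then have "r = 0" using mle[of "nat r"] r by (cases "r = 0") auto
    then show "int m dvd i" unfolding r_def by auto
  qed
  have mq: "int m dvd int q" using key[of "int q"] ex by (simp add: int_pow_int)
  define a where "a = f (g [^] m)"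
  define d where "d = int q div int m"
  have qd: "int q = int m * d" using mq unfolding d_def by simp
  have d0: "d > 0" using zero_less_mult_pos[of "int m" d] qd q m by simp
  have gm: "g [^] m \<in> S" using m by blast
  have "(g [^] m) [^] d = g [^] (int m * d)" using g by (simp flip: int_pow_int add: int_pow_pow)
  also have "\<dots> = \<one>" using qd gq by (simp flip: qd add: int_pow_int)
  finally have gmd: "(g [^] m) [^] d = \<one>" .
  have "int q dvd f ((g [^] m) [^] d) - d * a" unfolding a_def using hmod_int_pow[OF S f gm] .
  then have "int q dvd f \<one> - d * a" using gmd by simp
  then have "int q dvd f \<one> - (f \<one> - d * a)" by (rule dvd_diff[OF hmod_one[OF S f]])
  then have "int m * d dvd d * a" using qd by simp
  then have "d * int m dvd d * a" by (simp add: mult.commute)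
  then have ma: "int m dvd a" using d0 by simp
  define c where "c = a div int m"
  have ac: "a = int m * c" unfolding c_def using ma by simp
  define idx where "idx u = (SOME i::int. u \<otimes> g [^] (-i) \<in> S)" for u
  define F where "F u = f (u \<otimes> g [^] (- idx u)) + idx u * c" for u
  have indep: "int q dvd F u - (f (u \<otimes> g [^] (-i)) + i * c)"
    if u: "u \<in> carrier G" and ui: "u \<otimes> g [^] (-i) \<in> S" for u i
  proof -
    define j where "j = idx u"
    have uj: "u \<otimes> g [^] (-j) \<in> S" unfolding j_def idx_def by (rule someI, rule ui)
    have "g [^] (-j) = g [^] (-i) \<otimes> g [^] (i-j)" using int_pow_mult[OF g(1), of "-i" "i-j"] by simp
    then have e1: "u \<otimes> g [^] (-j) = (u \<otimes> g [^] (-i)) \<otimes> g [^] (i-j)" using u g by (simp add: m_assoc)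
    then have "g [^] (i-j) = inv (u \<otimes> g [^] (-i)) \<otimes> (u \<otimes> g [^] (-j))" using u g
      by (simp add: inv_solve_left)
    then have "g [^] (i-j) \<in> S" using subgroup.m_closed[OF S subgroup.m_inv_closed[OF S ui] uj] by simp
    then obtain k where k: "i - j = int m * k" using key by blast
    have gk: "g [^] (i-j) = (g [^] m) [^] k" using g k by (simp flip: int_pow_int add: int_pow_pow)
    have h1: "int q dvd f (u \<otimes> g [^] (-j)) - f (u \<otimes> g [^] (-i)) - f (g [^] (i-j))"
    proof -
      have "int q dvd f ((u \<otimes> g [^] (-i)) \<otimes> g [^] (i-j)) - f (u \<otimes> g [^] (-i)) - f (g [^] (i-j))"
        using f ui \<open>g [^] (i-j) \<in> S\<close> unfolding hmod_def by blast
      then show ?thesis by (simp only: e1)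
    qed
    have h2: "int q dvd f (g [^] (i-j)) - k * a" using gk hmod_int_pow[OF S f gm, of k] unfolding a_def by simp
    have "int q dvd (f (u \<otimes> g [^] (-j)) - f (u \<otimes> g [^] (-i)) - f (g [^] (i-j))) + (f (g [^] (i-j)) - k * a)"
      using h1 h2 by (rule dvd_add)
    moreover have "F u - (f (u \<otimes> g [^] (-i)) + i * c) = (f (u \<otimes> g [^] (-j)) - f (u \<otimes> g [^] (-i)) - f (g [^] (i-j))) + (f (g [^] (i-j)) - k * a)"
    proof -
      have "(i - j) * c = k * a" using k ac by (simp add: algebra_simps)
      then show ?thesis unfolding F_def j_def[symmetric] by (simp add: algebra_simps)
    qed
    ultimately show ?thesis by (simp only:)
  qed
  define T where "T = {u \<in> carrier G. \<exists>i::int. u \<otimes> g [^] (-i) \<in> S}"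
  have ST: "S \<subseteq> T"
  proof
    fix s assume s: "s \<in> S"
    then have sc: "s \<in> carrier G" using Sc by blast
    have "s \<otimes> g [^] (- (0::int)) \<in> S" using s sc by simp
    then show "s \<in> T" unfolding T_def using sc by blast
  qed
  have gT: "g \<in> T" unfolding T_def using g subgroup.one_closed[OF S]
    by (auto intro!: exI[of _ 1] simp: int_pow_neg r_inv)
  have Tsub: "subgroup T G"
  proof (rule subgroupI)
    show "T \<subseteq> carrier G" unfolding T_def by blast
    show "T \<noteq> {}" using gT by blast
    fix u v assume uT: "u \<in> T" and vT: "v \<in> T"
    then obtain i j :: int where u: "u \<in> carrier G" "u \<otimes> g [^] (-i) \<in> S" and v: "v \<in> carrier G" "v \<otimes> g [^] (-j) \<in> S"
      unfolding T_def by blast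
    have "(u \<otimes> v) \<otimes> g [^] (-(i+j)) \<in> S" using subgroup.m_closed[OF S u(2) v(2)] unfolding shift_mult[OF u(1) v(1) g(1)] .
    then show "u \<otimes> v \<in> T" unfolding T_def using u v by blast
    have "inv u \<otimes> g [^] (- (-i)) = inv (u \<otimes> g [^] (-i))" using u g by (simp add: inv_mult int_pow_neg)
    then have "inv u \<otimes> g [^] (- (-i)) \<in> S" using subgroup.m_inv_closed[OF S u(2)] by simp
    then show "inv u \<in> T" unfolding T_def using u by blast
  qed
  have FT: "hmod G (int q) T F" unfolding hmod_def
  proof (intro ballI)
    fix u v assume uT: "u \<in> T" and vT: "v \<in> T"
    then obtain i j :: int where u: "u \<in> carrier G" "u \<otimes> g [^] (-i) \<in> S" and v: "v \<in> carrier G" "v \<otimes> g [^] (-j) \<in> S"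
      unfolding T_def by blast
    have uv: "(u \<otimes> v) \<otimes> g [^] (-(i+j)) \<in> S" using subgroup.m_closed[OF S u(2) v(2)] unfolding shift_mult[OF u(1) v(1) g(1)] .
    have h0: "int q dvd f ((u \<otimes> v) \<otimes> g [^] (-(i+j))) - f (u \<otimes> g [^] (-i)) - f (v \<otimes> g [^] (-j))"
    proof -
      have "int q dvd f ((u \<otimes> g [^] (-i)) \<otimes> (v \<otimes> g [^] (-j))) - f (u \<otimes> g [^] (-i)) - f (v \<otimes> g [^] (-j))"
        using f u(2) v(2) unfolding hmod_def by blast
      then show ?thesis unfolding shift_mult[OF u(1) v(1) g(1)] .
    qed
    have h1: "int q dvd F (u \<otimes> v) - (f ((u \<otimes> v) \<otimes> g [^] (-(i+j))) + (i+j) * c)"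
      using indep[OF _ uv] u v by simp
    have h2: "int q dvd F u - (f (u \<otimes> g [^] (-i)) + i * c)" using indep u by simp
    have h3: "int q dvd F v - (f (v \<otimes> g [^] (-j)) + j * c)" using indep v by simp
    have "int q dvd (F (u \<otimes> v) - (f ((u \<otimes> v) \<otimes> g [^] (-(i+j))) + (i+j) * c)) + (f ((u \<otimes> v) \<otimes> g [^] (-(i+j))) - f (u \<otimes> g [^] (-i)) - f (v \<otimes> g [^] (-j)))
       - (F u - (f (u \<otimes> g [^] (-i)) + i * c)) - (F v - (f (v \<otimes> g [^] (-j)) + j * c))"
      by (rule dvd_diff[OF dvd_diff[OF dvd_add[OF h1 h0] h2] h3])
    then show "int q dvd F (u \<otimes> v) - F u - F v" by (simp add: algebra_simps)
  qed
  have Fext: "\<forall>s\<in>S. int q dvd F s - f s"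
  proof
    fix s assume s: "s \<in> S"
    then have sc: "s \<in> carrier G" using Sc by blast
    have "s \<otimes> g [^] (- 0::int) \<in> S" using s sc by simp
    from indep[OF sc this] show "int q dvd F s - f s" using sc by simp
  qed
  show ?thesis using Tsub ST gT FT Fext by blast
qed

lemma ext_hom:
  assumes fin: "finite (carrier G)" and ex: "\<forall>u\<in>carrier G. u [^] q = \<one>" and q: "q > 0"
  shows "subgroup S G \<Longrightarrow> hmod G (int q) S f \<Longrightarrow> \<exists>F. hmod G (int q) (carrier G) F \<and> (\<forall>s\<in>S. int q dvd F s - f s)"
proof (induction "card (carrier G - S)" arbitrary: S f rule: less_induct)
  case less
  show ?case
  proof (cases "S = carrier G")
    case True
    then show ?thesis using less.prems by (intro exI[of _ f]) auto
  next
    case False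
    then obtain g where g: "g \<in> carrier G" "g \<notin> S" using subgroup.subset[OF less.prems(1)] False by blast
    obtain T F where T: "subgroup T G" "S \<subseteq> T" "g \<in> T" "hmod G (int q) T F" "\<forall>s\<in>S. int q dvd F s - f s"
      using ext_step[OF less.prems(1) g less.prems(2) _ q] ex g by blast
    have "carrier G - T \<subset> carrier G - S" using T g by blast
    then have "card (carrier G - T) < card (carrier G - S)" using fin by (meson finite_Diff psubset_card_mono)
    then obtain F' where F': "hmod G (int q) (carrier G) F'" "\<forall>s\<in>T. int q dvd F' s - F s"
      using less.hyps T by blast
    have "\<forall>s\<in>S. int q dvd F' s - f s"
    proof
      fix s assume "s \<in> S"
      then have "int q dvd (F' s - F s) + (F s - f s)" using T F' by (intro dvd_add) auto
      then show "int q dvd F' s - f s" by simp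
    qed
    then show ?thesis using F' by blast
  qed
qed

lemma cyc_char:
  assumes g: "g \<in> carrier G" and hd: "\<And>i::int. g [^] i = \<one> \<Longrightarrow> int q dvd i * d"
  shows "\<exists>f. hmod G (int q) (range (\<lambda>i::int. g [^] i)) f \<and> (\<forall>i::int. int q dvd f (g [^] i) - i * d)"
proof -
  define f where "f u = (SOME i::int. u = g [^] i) * d" for u
  have fi: "int q dvd f (g [^] i) - i * d" for i :: int
  proof -
    define j where "j = (SOME j::int. g [^] i = g [^] j)"
    have "g [^] i = g [^] j" unfolding j_def by (rule someI[of _ i]) simp
    then have "g [^] (j - i) = \<one>" using g by (simp add: int_pow_diff)
    then have "int q dvd (j - i) * d" by (rule hd)
    then show ?thesis unfolding f_def j_def[symmetric] by (simp add: algebra_simps)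
  qed
  have "hmod G (int q) (range (\<lambda>i::int. g [^] i)) f" unfolding hmod_def
  proof (intro ballI)
    fix a b assume "a \<in> range (\<lambda>i::int. g [^] i)" "b \<in> range (\<lambda>i::int. g [^] i)"
    then obtain i j :: int where ab: "a = g [^] i" "b = g [^] j" by blast
    have e: "a \<otimes> b = g [^] (i + j)" using ab g by (simp add: int_pow_mult)
    have "int q dvd (f (g [^] (i+j)) - (i+j) * d) - (f (g [^] i) - i * d) - (f (g [^] j) - j * d)"
      by (rule dvd_diff[OF dvd_diff[OF fi fi] fi])
    then show "int q dvd f (a \<otimes> b) - f a - f b" using e ab by (simp add: algebra_simps)
  qed
  then show ?thesis using fi by blast
qed

lemma cyc_subgroup:
  assumes g: "g \<in> carrier G" shows "subgroup (range (\<lambda>i::int. g [^] i)) G"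
proof -
  have "range (\<lambda>i::int. g [^] i) = generate G {g}" using generate_pow[OF g] by auto
  then show ?thesis using generate_is_subgroup g by simp
qed

lemma char_ext:
  assumes fin: "finite (carrier G)" and ex: "\<forall>u\<in>carrier G. u [^] q = \<one>" and q: "q > 0"
    and g: "g \<in> carrier G" and hd: "\<And>i::int. g [^] i = \<one> \<Longrightarrow> int q dvd i * d"
  shows "\<exists>F. hmod G (int q) (carrier G) F \<and> (\<forall>i::int. int q dvd F (g [^] i) - i * d)"
proof -
  obtain f where f: "hmod G (int q) (range (\<lambda>i::int. g [^] i)) f" "\<forall>i::int. int q dvd f (g [^] i) - i * d"
    using cyc_char[OF g hd] by blast
  obtain F where F: "hmod G (int q) (carrier G) F" "\<forall>s\<in>range (\<lambda>i::int. g [^] i). int q dvd F s - f s"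
    using ext_hom[OF fin ex q cyc_subgroup[OF g] f(1)] by blast
  have "int q dvd F (g [^] i) - i * d" for i :: int
  proof -
    have "int q dvd (F (g [^] i) - f (g [^] i)) + (f (g [^] i) - i * d)" using F(2) f(2) by (intro dvd_add) auto
    then show ?thesis by simp
  qed
  then show ?thesis using F(1) by blast
qed

lemma xpow_hom:
  assumes x: "x \<in> carrier G" "ord x = q" and F: "hmod G (int q) (carrier G) F"
    and u: "u \<in> carrier G" and v: "v \<in> carrier G"
  shows "x [^] F (u \<otimes> v) = x [^] F u \<otimes> x [^] F v"
proof -
  have "int q dvd F (u \<otimes> v) - F u - F v" using F u v unfolding hmod_def by blast
  then have "int q dvd (F u + F v) - F (u \<otimes> v)" by (metis dvd_minus_iff minus_diff_eq diff_diff_eq)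
  then have "x [^] F (u \<otimes> v) = x [^] (F u + F v)" using int_pow_eq[OF x(1)] x(2) by simp
  then show ?thesis using x by (simp add: int_pow_mult)
qed

lemma core:
  assumes fin: "finite (carrier G)" and p: "Factorial_Ring.prime p" and qpt: "q = p * t" and t: "t > 0"
    and ex: "\<forall>u\<in>carrier G. u [^] q = \<one>" and x: "x \<in> carrier G" "ord x = q"
    and K: "characteristic_subgroup K G" and z: "z \<in> K" "z \<noteq> \<one>" "z [^] p = \<one>"
  shows "x [^] t \<in> K"
proof -
  have p1: "p > 1" using p prime_gt_1_nat by blast
  have q0: "q > 0" using qpt t p1 by simp
  have Ks: "subgroup K G" using K unfolding characteristic_subgroup_def by blast
  have zc: "z \<in> carrier G" by (rule subgroup.mem_carrier[OF Ks z(1)])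
  have xeq: "x [^] (a::int) = x [^] b \<longleftrightarrow> int q dvd b - a" for a b using int_pow_eq[OF x(1)] x(2) by simp
  obtain r where r: "hmod G (int q) (carrier G) r" "\<forall>i::int. int q dvd r (x [^] i) - i * 1"
    using char_ext[OF fin ex q0 x(1), of 1] int_pow_eq_id[OF x(1)] x(2) by auto
  define R where "R u = x [^] r u" for u
  have Rc: "R u \<in> carrier G" for u unfolding R_def using x by simp
  have Rhom: "R \<in> hom G G" unfolding hom_def R_def using Rc xpow_hom[OF x r(1)] by (auto simp: R_def)
  have Rx: "R (x [^] i) = x [^] i" for i :: int
    unfolding R_def xeq using r(2) by (metis dvd_minus_iff minus_diff_eq mult_1_right)
  define N where "N u = u \<otimes> inv (R u)" for u
  have Nc: "u \<in> carrier G \<Longrightarrow> N u \<in> carrier G" for u unfolding N_def using Rc by simp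
  have Nmul: "N (u \<otimes> v) = N u \<otimes> N v" if "u \<in> carrier G" "v \<in> carrier G" for u v
  proof -
    have "R (u \<otimes> v) = R u \<otimes> R v" by (rule hom_mult[OF Rhom that])
    moreover have "inv (R u \<otimes> R v) = inv (R u) \<otimes> inv (R v)" by (rule inv_mult[OF Rc Rc])
    moreover have "(u \<otimes> v) \<otimes> (inv (R u) \<otimes> inv (R v)) = (u \<otimes> inv (R u)) \<otimes> (v \<otimes> inv (R v))"
      using that Rc[of u] Rc[of v] inv_closed[OF Rc[of u]] inv_closed[OF Rc[of v]] by (simp add: m_ac)
    ultimately show ?thesis unfolding N_def by simp
  qed
  have Nhom: "N \<in> hom G G" unfolding hom_def using Nc Nmul by auto
  have Nx: "N (x [^] i) = \<one>" for i :: int unfolding N_def Rx using x by simp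
  have zRN: "z = R z \<otimes> N z" unfolding N_def using zc Rc by (simp add: m_ac)
  define y where "y = x [^] t"
  have yc: "y \<in> carrier G" unfolding y_def using x by simp
  have ordy: "ord y = p" unfolding y_def using ord_pow[OF x(1), of t] x(2) qpt t by simp
  have yint: "y = x [^] int t" unfolding y_def by (simp add: int_pow_int)
  show ?thesis
  proof (cases "N z = \<one>")
    case True
    then have zR: "z = x [^] r z" using zRN Rc unfolding R_def by simp
    have "\<one> = z [^] int p" using z by (simp add: int_pow_int)
    also have "\<dots> = x [^] (r z * int p)" using zR x by (metis int_pow_pow)
    finally have e: "\<one> = x [^] (r z * int p)" .
    have "int q dvd r z * int p" using int_pow_eq_id[OF x(1), of "r z * int p"] x(2) e[symmetric] by simp
    then have "int t * int p dvd r z * int p" using qpt by (simp add: mult.commute)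
    then have "int t dvd r z" using p1 by simp
    then obtain s where s: "r z = int t * s" by blast
    have zy: "z = y [^] s" using zR s x by (simp add: yint int_pow_pow)
    have nps: "\<not> int p dvd s"
    proof
      assume "int p dvd s"
      then have "int q dvd int t * s" using qpt by (simp add: mult.commute mult_dvd_mono)
      then have "z = \<one>" using zR s int_pow_eq_id[OF x(1)] x(2) by simp
      then show False using z by simp
    qed
    have "Factorial_Ring.prime (int p)" using p by simp
    then have "coprime (int p) s" using nps prime_imp_coprime by blast
    then have "gcd s (int p) = 1" by (simp add: coprime_iff_gcd_eq_1 gcd.commute)
    then obtain a b where ab: "a * s + b * int p = 1" using bezout_int[of s "int p"] by auto
    have "z [^] a = y [^] (s * a)" using zy yc by (simp add: int_pow_pow)
    also have "\<dots> = y [^] (1::int)" using int_pow_eq[OF yc] ordy ab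
      by (metis add_diff_cancel_left' dvd_triv_right mult.commute)
    finally have "z [^] a = y" using yc by simp
    then have "y \<in> K" using subgroup_int_pow_closed[OF Ks z(1), of a] by simp
    then show ?thesis unfolding y_def .
  next
    case False
    define m where "m = N z"
    have mc: "m \<in> carrier G" unfolding m_def using Nc zc by simp
    have "m [^] p = N (z [^] p)" unfolding m_def using hom_nat_pow[OF Nhom zc] by simp
    also have "\<dots> = \<one>" using z Nx[of 0] by simp
    finally have mp: "m [^] p = \<one>" .
    have "ord m dvd p" using mp pow_eq_id[OF mc] by simp
    moreover have "ord m \<noteq> 1" using ord_eq_1[OF mc] False m_def by simp
    ultimately have ordm: "ord m = p" using p by (meson prime_nat_iff)
    have hd: "int q dvd i * int t" if "m [^] i = \<one>" for i :: int
    proof -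
      have "int p dvd i" using that int_pow_eq_id[OF mc] ordm by simp
      then show ?thesis using qpt by (simp add: mult_dvd_mono)
    qed
    obtain \<chi> where chi: "hmod G (int q) (carrier G) \<chi>" "\<forall>i::int. int q dvd \<chi> (m [^] i) - i * int t"
      using char_ext[OF fin ex q0 mc hd] by blast
    define \<phi> where "\<phi> u = u \<otimes> x [^] \<chi> (N u)" for u
    have \<phi>c: "u \<in> carrier G \<Longrightarrow> \<phi> u \<in> carrier G" for u unfolding \<phi>_def using x by simp
    have \<phi>mul: "\<phi> (u \<otimes> v) = \<phi> u \<otimes> \<phi> v" if "u \<in> carrier G" "v \<in> carrier G" for u v
      unfolding \<phi>_def using that Nmul xpow_hom[OF x chi(1) Nc Nc] x by (simp add: m_ac)
    have \<phi>hom: "\<phi> \<in> hom G G" unfolding hom_def using \<phi>c \<phi>mul by auto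
    have N\<phi>: "N (\<phi> u) = N u" if "u \<in> carrier G" for u
      unfolding \<phi>_def using Nmul[OF that] Nx x that Nc[OF that] by simp
    have \<phi>inj: "inj_on \<phi> (carrier G)"
    proof (rule inj_onI)
      fix u v assume uv: "u \<in> carrier G" "v \<in> carrier G" "\<phi> u = \<phi> v"
      then have "N u = N v" using N\<phi>[OF uv(1)] N\<phi>[OF uv(2)] by simp
      then have "u \<otimes> x [^] \<chi> (N u) = v \<otimes> x [^] \<chi> (N u)" using uv(3) unfolding \<phi>_def by simp
      then show "u = v" using r_cancel[of "x [^] \<chi> (N u)" u v] uv x by simp
    qed
    have "\<phi> ` carrier G \<subseteq> carrier G" using \<phi>c by blast
    then have "\<phi> ` carrier G = carrier G" using endo_inj_surj[OF fin _ \<phi>inj] by simp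
    then have "\<phi> \<in> iso G G" by (simp add: iso_iff \<phi>hom \<phi>inj)
    then have "\<phi> ` K = K" using K unfolding characteristic_subgroup_def by blast
    then have \<phi>z: "\<phi> z \<in> K" using z(1) by (metis imageI)
    have "int q dvd \<chi> (m [^] (1::int)) - 1 * int t" using chi(2) by blast
    then have "int q dvd \<chi> m - int t" using mc by simp
    then have "int q dvd - (\<chi> m - int t)" by (simp only: dvd_minus_iff)
    then have "int q dvd int t - \<chi> m" by simp
    then have "x [^] \<chi> m = x [^] int t" unfolding xeq by simp
    then have "\<phi> z = z \<otimes> y" unfolding \<phi>_def m_def[symmetric] yint by simp
    then have "y = inv z \<otimes> \<phi> z" using zc yc by (simp add: m_assoc[symmetric])
    moreover have "inv z \<otimes> \<phi> z \<in> K" by (rule subgroup.m_closed[OF Ks subgroup.m_inv_closed[OF Ks z(1)] \<phi>z])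
    ultimately have "y \<in> K" by simp
    then show ?thesis unfolding y_def .
  qed
qed

lemma main_ctx:
  assumes fin: "finite (carrier G)" and p: "Factorial_Ring.prime p" and n: "order G = p ^ n"
    and nt: "carrier G \<noteq> {\<one>}"
  shows "\<exists>H. characteristic_subgroup H G \<and> H \<noteq> {\<one>} \<and>
           (\<forall>K. characteristic_subgroup K G \<and> K \<noteq> {\<one>} \<longrightarrow> H \<subseteq> K)"
proof -
  have p1: "p > 1" using p prime_gt_1_nat by blast
  have ordp: "\<exists>k. ord u = p ^ k" if "u \<in> carrier G" for u
  proof -
    have "ord u dvd p ^ n" using ord_dvd_group_order[OF that] n by simp
    then show ?thesis using divides_primepow_nat[OF p] by blast
  qed
  define M where "M = Max (ord ` carrier G)"
  have "M \<in> ord ` carrier G" unfolding M_def using fin by (intro Max_in) auto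
  then obtain x where x: "x \<in> carrier G" "ord x = M" by blast
  have xmax: "ord u \<le> ord x" if "u \<in> carrier G" for u unfolding x(2) M_def using fin that by simp
  obtain e where e: "ord x = p ^ e" using ordp[OF x(1)] by blast
  have dv: "ord u dvd p ^ e" if u: "u \<in> carrier G" for u
  proof -
    obtain k where k: "ord u = p ^ k" using ordp[OF u] by blast
    have "p ^ k \<le> p ^ e" using xmax[OF u] k e by simp
    then have "k \<le> e" using power_le_imp_le_exp[OF p1] by blast
    then show ?thesis using k le_imp_power_dvd by simp
  qed
  have ex: "\<forall>u\<in>carrier G. u [^] (p ^ e) = \<one>" using dv pow_eq_id by blast
  obtain u0 where u0: "u0 \<in> carrier G" "u0 \<noteq> \<one>" using nt one_closed by blast
  have e0: "e \<noteq> 0"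
  proof
    assume "e = 0"
    then have "ord u0 = 1" using dv[OF u0(1)] by simp
    then show False using ord_eq_1[OF u0(1)] u0(2) by simp
  qed
  define t where "t = p ^ (e - 1)"
  have qpt: "p ^ e = p * t" unfolding t_def using e0 by (cases e) simp_all
  have t0: "t > 0" unfolding t_def using p1 by simp
  define H where "H = (\<lambda>u. u [^] t) ` carrier G"
  have Hsub: "subgroup H G"
  proof (rule subgroupI)
    show "H \<subseteq> carrier G" unfolding H_def by auto
    show "H \<noteq> {}" unfolding H_def by auto
    fix a b assume "a \<in> H" "b \<in> H"
    then obtain u v where uv: "u \<in> carrier G" "v \<in> carrier G" "a = u [^] t" "b = v [^] t" unfolding H_def by blast
    have "inv a = (inv u) [^] t" using uv by (simp add: nat_pow_inv)
    then show "inv a \<in> H" unfolding H_def using uv by blast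
    have "a \<otimes> b = (u \<otimes> v) [^] t" using uv by (simp add: pow_mult_distrib[OF m_comm])
    then show "a \<otimes> b \<in> H" unfolding H_def using uv by blast
  qed
  have Hchar: "characteristic_subgroup H G" unfolding characteristic_subgroup_def
  proof (intro conjI ballI Hsub)
    fix \<phi> assume \<phi>: "\<phi> \<in> iso G G"
    then have h: "\<phi> \<in> hom G G" and im: "\<phi> ` carrier G = carrier G" by (auto simp: iso_iff)
    have "\<phi> ` H = (\<lambda>u. \<phi> (u [^] t)) ` carrier G" unfolding H_def by (simp add: image_image)
    also have "\<dots> = (\<lambda>u. (\<phi> u) [^] t) ` carrier G"
      using hom_nat_pow[OF h _ is_group is_group] by (intro image_cong) auto
    also have "\<dots> = (\<lambda>v. v [^] t) ` (\<phi> ` carrier G)" by (simp add: image_image)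
    also have "\<dots> = H" unfolding H_def im ..
    finally show "\<phi> ` H = H" .
  qed
  have xt: "x [^] t \<in> H" unfolding H_def using x by blast
  have xt1: "x [^] t \<noteq> \<one>"
  proof
    assume "x [^] t = \<one>"
    then have "p * t dvd t" using pow_eq_id[OF x(1)] e qpt by simp
    then have "p * t \<le> t" using t0 by (simp add: dvd_imp_le)
    then show False using p1 t0 by simp
  qed
  have Hnt: "H \<noteq> {\<one>}" using xt xt1 by blast
  have Hmin: "H \<subseteq> K" if K: "characteristic_subgroup K G" "K \<noteq> {\<one>}" for K
  proof
    have Ks: "subgroup K G" using K unfolding characteristic_subgroup_def by blast
    obtain w where w: "w \<in> K" "w \<noteq> \<one>" using K(2) subgroup.one_closed[OF Ks] by blast
    have wc: "w \<in> carrier G" by (rule subgroup.mem_carrier[OF Ks w(1)])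
    obtain k where k: "ord w = p ^ k" using ordp[OF wc] by blast
    have k0: "k \<noteq> 0" using k ord_eq_1[OF wc] w by auto
    define z where "z = w [^] (p ^ (k - 1))"
    have "w [^] int (p ^ (k - 1)) \<in> K" by (rule subgroup_int_pow_closed[OF Ks w(1)])
    then have zK: "z \<in> K" unfolding z_def int_pow_int .
    have pk: "p ^ (k - 1) * p = p ^ k" using k0 by (cases k) (simp_all add: mult.commute)
    have "z [^] p = w [^] (p ^ (k - 1) * p)" unfolding z_def by (rule nat_pow_pow[OF wc])
    also have "\<dots> = w [^] ord w" using pk k by simp
    also have "\<dots> = \<one>" using wc by simp
    finally have zp: "z [^] p = \<one>" .
    have z1: "z \<noteq> \<one>"
    proof
      assume "z = \<one>"
      then have "p ^ k dvd p ^ (k - 1)" using pow_eq_id[OF wc] k unfolding z_def by simp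
      then have "k \<le> k - 1" using power_dvd_imp_le[of p k "k - 1"] p1 by simp
      then show False using k0 by simp
    qed
    fix v assume "v \<in> H"
    then obtain u where u: "u \<in> carrier G" "v = u [^] t" unfolding H_def by blast
    show "v \<in> K"
    proof (cases "u [^] t = \<one>")
      case True
      then show ?thesis using u subgroup.one_closed[OF Ks] by simp
    next
      case False
      obtain k' where k': "ord u = p ^ k'" using ordp[OF u(1)] by blast
      have "k' \<le> e" using dv[OF u(1)] k' power_dvd_imp_le[of p k' e] p1 by simp
      moreover have "\<not> k' \<le> e - 1"
      proof
        assume "k' \<le> e - 1"
        then have "ord u dvd t" unfolding t_def k' by (rule le_imp_power_dvd)
        then show False using False pow_eq_id[OF u(1)] by simp
      qed
      ultimately have "k' = e" by simp
      then have "ord u = p ^ e" using k' by simp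
      then have "u [^] t \<in> K" using core[OF fin p qpt t0 ex u(1) _ K(1) zK z1 zp] by simp
      then show ?thesis using u by simp
    qed
  qed
  show ?thesis using Hchar Hnt Hmin by blast
qed

end

theorem mainTheorem13:
  fixes G :: "('a, 'b) monoid_scheme" and p :: nat
  assumes "comm_group G"
    and "finite (carrier G)"
    and "Factorial_Ring.prime p"
    and "\<exists>n. order G = p ^ n"
    and "carrier G \<noteq> {\<one>\<^bsub>G\<^esub>}"
  shows "\<exists>H. characteristic_subgroup H G \<and> H \<noteq> {\<one>\<^bsub>G\<^esub>} \<and>
           (\<forall>K. characteristic_subgroup K G \<and> K \<noteq> {\<one>\<^bsub>G\<^esub>} \<longrightarrow> H \<subseteq> K)"
proof -
  interpret comm_group G by (rule assms(1))
  obtain n where n: "order G = p ^ n" using assms(4) by blast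
  show ?thesis by (rule main_ctx[OF assms(2,3) n assms(5)])
qed

end
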